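(* There exist a strongly connected digraph $D$ and a strongly connected spanning subdigraph $H$ of $D$ such that $src^*(D) > src^*(H)$.
   Context: All digraphs are finite, without loops or multiple arcs. For a strongly connected digraph $D$, an arc-colouring $\Gamma: A(D)\to\{1,\dots,k\}$ is strongly rainbow connected if for every ordered pair of distinct vertices $x,y$ there is a directed $xy$-path of length equal to the distance $d_D(x,y)$ (an $xy$-geodesic) whose arcs have pairwise distinct colours. The strong rainbow connection number $src^*(D)$ is the minimum $k$ for which $D$ admits a strongly rainbow connected arc-colouring with $k$ colours. *)

theory Defs
  imports Main
begin

text \<open>A digraph is a pair (V, A): a finite vertex set and an arc set A \<subseteq> V \<times> V
  without loops (multiple arcs are excluded automatically since A is a set).\<close>
definition digraph :: "'a set \<Rightarrow> ('a \<times> 'a) set \<Rightarrow> bool" where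
  "digraph V A \<longleftrightarrow> finite V \<and> A \<subseteq> V \<times> V \<and> (\<forall>x. (x, x) \<notin> A)"

definition arcs_of :: "'a list \<Rightarrow> ('a \<times> 'a) list" where
  "arcs_of p = zip p (tl p)"

definition is_path :: "('a \<times> 'a) set \<Rightarrow> 'a \<Rightarrow> 'a \<Rightarrow> 'a list \<Rightarrow> bool" where
  "is_path A x y p \<longleftrightarrow> p \<noteq> [] \<and> hd p = x \<and> last p = y \<and> distinct p
      \<and> set (arcs_of p) \<subseteq> A"

definition path_len :: "'a list \<Rightarrow> nat" where
  "path_len p = length p - 1"

definition strongly_connected :: "'a set \<Rightarrow> ('a \<times> 'a) set \<Rightarrow> bool" where
  "strongly_connected V A \<longleftrightarrow> V \<noteq> {} \<and> (\<forall>x\<in>V. \<forall>y\<in>V. \<exists>p. is_path A x y p)"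

definition ddist :: "('a \<times> 'a) set \<Rightarrow> 'a \<Rightarrow> 'a \<Rightarrow> nat" where
  "ddist A x y = (LEAST n. \<exists>p. is_path A x y p \<and> path_len p = n)"

definition geodesic :: "('a \<times> 'a) set \<Rightarrow> 'a \<Rightarrow> 'a \<Rightarrow> 'a list \<Rightarrow> bool" where
  "geodesic A x y p \<longleftrightarrow> is_path A x y p \<and> path_len p = ddist A x y"

definition strongly_rainbow_colouring ::
    "'a set \<Rightarrow> ('a \<times> 'a) set \<Rightarrow> nat \<Rightarrow> ('a \<times> 'a \<Rightarrow> nat) \<Rightarrow> bool" where
  "strongly_rainbow_colouring V A k \<Gamma> \<longleftrightarrow>
     (\<forall>a\<in>A. \<Gamma> a \<in> {1..k}) \<and>
     (\<forall>x\<in>V. \<forall>y\<in>V. x \<noteq> y \<longrightarrow>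
        (\<exists>p. geodesic A x y p \<and> distinct (map \<Gamma> (arcs_of p))))"

definition src :: "'a set \<Rightarrow> ('a \<times> 'a) set \<Rightarrow> nat" where
  "src V A = (LEAST k. \<exists>\<Gamma>. strongly_rainbow_colouring V A k \<Gamma>)"

end

theory Submission
  imports Defs
begin


fun ext :: "(nat\<times>nat) list \<Rightarrow> nat \<Rightarrow> nat list \<Rightarrow> nat \<Rightarrow> nat list list" where
  "ext E 0 vis v = [[v]]"
| "ext E (Suc n) vis v = [v] # concat (map (\<lambda>w. map ((#) v) (ext E n (v#vis) w))
      (filter (\<lambda>w. (v,w) \<in> set E \<and> w \<notin> set (v#vis)) (remdups (map snd E))))"

lemma arcs_of_simps[simp]: "arcs_of [] = []" "arcs_of [v] = []"
  "arcs_of (v # w # r) = (v,w) # arcs_of (w # r)"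
  by (simp_all add: arcs_of_def)

lemma ext_iff: "v \<notin> set vis \<Longrightarrow> p \<in> set (ext E n vis v) \<longleftrightarrow>
   (\<exists>q. p = v#q) \<and> distinct p \<and> set p \<inter> set vis = {} \<and> set (arcs_of p) \<subseteq> set E \<and> length p \<le> Suc n"
proof (induction n arbitrary: vis v p)
  case 0
  then show ?case
    by (cases p) auto
next
  case (Suc n)
  show ?case
  proof
    assume "p \<in> set (ext E (Suc n) vis v)"
    then consider "p = [v]" | w q where "(v,w) \<in> set E" "w \<notin> set (v#vis)" "p = v # q"
      "q \<in> set (ext E n (v#vis) w)" by auto
    then show "(\<exists>q. p = v#q) \<and> distinct p \<and> set p \<inter> set vis = {} \<and> set (arcs_of p) \<subseteq> set E \<and> length p \<le> Suc (Suc n)"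
    proof cases
      case 1 then show ?thesis using Suc.prems by auto
    next
      case 2
      have "w \<notin> set (v#vis)" using 2 by simp
      then have q: "(\<exists>r. q = w#r) \<and> distinct q \<and> set q \<inter> set (v#vis) = {} \<and> set (arcs_of q) \<subseteq> set E \<and> length q \<le> Suc n"
        using Suc.IH[where vis="v#vis" and v=w and p=q] 2 by blast
      then obtain r where r: "q = w#r" by blast
      show ?thesis using q r 2 Suc.prems by auto
    qed
  next
    assume a: "(\<exists>q. p = v#q) \<and> distinct p \<and> set p \<inter> set vis = {} \<and> set (arcs_of p) \<subseteq> set E \<and> length p \<le> Suc (Suc n)"
    then obtain q where q: "p = v#q" by blast
    show "p \<in> set (ext E (Suc n) vis v)"
    proof (cases q)
      case Nil then show ?thesis using q by simp
    next
      case (Cons w r)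
      have w: "(v,w) \<in> set E" "w \<notin> set (v#vis)" using a q Cons by auto
      have "q \<in> set (ext E n (v#vis) w)"
        using Suc.IH[where vis="v#vis" and v=w and p=q] w a q Cons by auto
      moreover have "w \<in> set (map snd E)" using w(1) by force
      ultimately show ?thesis using q w by auto
    qed
  qed
qed


lemma set_path_sub: "p \<noteq> [] \<Longrightarrow> set p \<subseteq> insert (hd p) (snd ` set (arcs_of p))"
proof (induction p)
  case Nil then show ?case by simp
next
  case (Cons a p)
  then show ?case by (cases p) auto
qed

definition pths :: "(nat\<times>nat) list \<Rightarrow> nat \<Rightarrow> nat \<Rightarrow> nat \<Rightarrow> nat list list" where
  "pths E N x y = filter (\<lambda>p. last p = y) (ext E (N - 1) [] x)"

lemma ext0: "p \<in> set (ext E n [] x) \<longleftrightarrow>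
   (\<exists>q. p = x#q) \<and> distinct p \<and> set (arcs_of p) \<subseteq> set E \<and> length p \<le> Suc n"
  using ext_iff[of x "[]" p E n] by simp

lemma is_path_ext:
  assumes E: "\<forall>e\<in>set E. snd e < N" and x: "x < N"
  shows "is_path (set E) x y p \<longleftrightarrow> p \<in> set (pths E N x y)"
proof
  assume p: "is_path (set E) x y p"
  have pne: "p \<noteq> []" "hd p = x" "last p = y" "distinct p" "set (arcs_of p) \<subseteq> set E"
    using p unfolding is_path_def by auto
  have "\<forall>e\<in>set (arcs_of p). snd e < N" using pne(5) E by blast
  then have "snd ` set (arcs_of p) \<subseteq> {..<N}" by auto
  moreover have "hd p \<in> {..<N}" using pne(2) x by simp
  ultimately have "insert (hd p) (snd ` set (arcs_of p)) \<subseteq> {..<N}" by simp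
  then have "set p \<subseteq> {..<N}" using set_path_sub[OF pne(1)] by (rule subset_trans[rotated])
  then have "card (set p) \<le> N" by (metis card_lessThan card_mono finite_lessThan)
  then have "length p \<le> N" using pne(4) distinct_card by metis
  then have l: "length p \<le> Suc (N - 1)" by linarith
  have "\<exists>q. p = x # q" using pne(1,2) by (metis list.collapse)
  then have "p \<in> set (ext E (N - 1) [] x)" unfolding ext0 using l pne(4,5) by blast
  then show "p \<in> set (pths E N x y)" unfolding pths_def using pne(3) by simp
next
  assume "p \<in> set (pths E N x y)"
  then have a: "p \<in> set (ext E (N - 1) [] x)" "last p = y" unfolding pths_def by auto
  have b: "(\<exists>q. p = x#q) \<and> distinct p \<and> set (arcs_of p) \<subseteq> set E \<and> length p \<le> Suc (N - 1)"
    using a(1) unfolding ext0 .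
  then obtain q where q: "p = x # q" "distinct p" "set (arcs_of p) \<subseteq> set E"
    by blast
  show "is_path (set E) x y p" unfolding is_path_def using q a(2) by simp
qed

definition sel :: "nat list list \<Rightarrow> nat list list" where
  "sel L = filter (\<lambda>p. path_len p = Min (set (map path_len L))) L"

definition geos :: "(nat\<times>nat) list \<Rightarrow> nat \<Rightarrow> nat \<Rightarrow> nat \<Rightarrow> nat list list" where
  "geos E N x y = sel (pths E N x y)"

lemma geodesic_iff:
  assumes E: "\<forall>e\<in>set E. snd e < N" and x: "x < N"
  shows "geodesic (set E) x y p \<longleftrightarrow> p \<in> set (geos E N x y)"
proof (cases "pths E N x y = []")
  case True
  then show ?thesis using is_path_ext[OF E x] unfolding geodesic_def geos_def sel_def by auto
next
  case False
  have S: "{n. \<exists>p. is_path (set E) x y p \<and> path_len p = n} = set (map path_len (pths E N x y))"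
    using is_path_ext[OF E x] by auto
  have P: "\<And>n. (\<exists>p. is_path (set E) x y p \<and> path_len p = n) \<longleftrightarrow> n \<in> set (map path_len (pths E N x y))"
    using S by blast
  have ex: "\<exists>n. n \<in> set (map path_len (pths E N x y))" using False by (cases "pths E N x y") auto
  have L: "(LEAST n. n \<in> set (map path_len (pths E N x y))) = Min {n. n \<in> set (map path_len (pths E N x y))}"
    by (rule Least_Min) (use ex in auto)
  have "ddist (set E) x y = Min (set (map path_len (pths E N x y)))"
    unfolding ddist_def P L by simp
  then show ?thesis using is_path_ext[OF E x] unfolding geodesic_def geos_def sel_def by auto
qed

definition good :: "(nat\<times>nat) list \<Rightarrow> nat \<Rightarrow> (nat\<times>nat \<Rightarrow> nat) \<Rightarrow> bool" where
  "good E N \<Gamma> = list_all (\<lambda>x. list_all (\<lambda>y. x = y \<or> list_ex (\<lambda>p. distinct (map \<Gamma> (arcs_of p))) (geos E N x y)) [0..<N]) [0..<N]"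

lemma good_imp:
  assumes E: "\<forall>e\<in>set E. snd e < N" and g: "good E N \<Gamma>"
  shows "\<forall>x\<in>{0..<N}. \<forall>y\<in>{0..<N}. x \<noteq> y \<longrightarrow> (\<exists>p. geodesic (set E) x y p \<and> distinct (map \<Gamma> (arcs_of p)))"
proof (intro ballI impI)
  fix x y assume x: "x \<in> {0..<N}" and y: "y \<in> {0..<N}" and xy: "x \<noteq> y"
  have G: "\<forall>x\<in>set [0..<N]. \<forall>y\<in>set [0..<N]. x = y \<or> list_ex (\<lambda>p. distinct (map \<Gamma> (arcs_of p))) (geos E N x y)"
    using g unfolding good_def list_all_iff .
  have "x \<in> set [0..<N]" "y \<in> set [0..<N]" using x y by auto
  then have "list_ex (\<lambda>p. distinct (map \<Gamma> (arcs_of p))) (geos E N x y)"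
    using G xy by blast
  then obtain p where "p \<in> set (geos E N x y)" "distinct (map \<Gamma> (arcs_of p))"
    unfolding list_ex_iff by blast
  then show "\<exists>p. geodesic (set E) x y p \<and> distinct (map \<Gamma> (arcs_of p))"
    using geodesic_iff[OF E] x by auto
qed

definition ED :: "(nat\<times>nat) list" where
  "ED = [(0, 1), (0, 3), (1, 2), (1, 5), (2, 3), (2, 5), (3, 4), (3, 6), (4, 5), (5, 0), (6, 2), (6, 4)]"
definition EH :: "(nat\<times>nat) list" where
  "EH = [(0, 1), (0, 3), (1, 2), (1, 5), (2, 5), (3, 4), (3, 6), (4, 5), (5, 0), (6, 2), (6, 4)]"
definition GD :: "nat\<times>nat \<Rightarrow> nat" where
  "GD e = (case map_of [((0, 1), 1), ((0, 3), 1), ((1, 2), 2), ((1, 5), 2), ((2, 3), 1), ((2, 5), 2), ((3, 4), 3), ((3, 6), 3), ((4, 5), 4), ((5, 0), 5), ((6, 2), 2), ((6, 4), 2)] e of Some c \<Rightarrow> c | None \<Rightarrow> 0)"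
definition GH :: "nat\<times>nat \<Rightarrow> nat" where
  "GH e = (case map_of [((0, 1), 1), ((0, 3), 1), ((1, 2), 2), ((1, 5), 3), ((2, 5), 3), ((3, 4), 2), ((3, 6), 2), ((4, 5), 3), ((5, 0), 4), ((6, 2), 1), ((6, 4), 2)] e of Some c \<Rightarrow> c | None \<Rightarrow> 0)"



lemma goodD: "good ED 7 GD" by code_simp
lemma goodH: "good EH 7 GH" by code_simp
lemma g14: "set (geos ED 7 1 4) = {[1,2,3,4]}" by code_simp
lemma g42: "set (geos ED 7 4 2) = {[4,5,0,1,2]}" by code_simp
lemma g31: "set (geos ED 7 3 1) = {[3,4,5,0,1]}" by code_simp

lemma ED_bound: "\<forall>e\<in>set ED. snd e < 7" by (simp add: ED_def)
lemma EH_bound: "\<forall>e\<in>set EH. snd e < 7" by (simp add: EH_def)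

lemma good_sc:
  assumes E: "\<forall>e\<in>set E. snd e < N" and g: "good E N \<Gamma>" and N: "0 < N"
  shows "strongly_connected {0..<N} (set E)"
  unfolding strongly_connected_def
proof (intro conjI ballI)
  show "{0..<N} \<noteq> {}" using N by simp
  fix x y assume x: "x \<in> {0..<N}" and y: "y \<in> {0..<N}"
  show "\<exists>p. is_path (set E) x y p"
  proof (cases "x = y")
    case True
    then have "is_path (set E) x y [x]" unfolding is_path_def by simp
    then show ?thesis by blast
  next
    case False
    then show ?thesis using good_imp[OF E g] x y unfolding geodesic_def by blast
  qed
qed

lemma colD: "strongly_rainbow_colouring {0..<7} (set ED) 5 GD"
  unfolding strongly_rainbow_colouring_def
proof
  show "\<forall>a\<in>set ED. GD a \<in> {1..5}" by code_simp
  show "\<forall>x\<in>{0..<7}. \<forall>y\<in>{0..<7}. x \<noteq> y \<longrightarrow> (\<exists>p. geodesic (set ED) x y p \<and> distinct (map GD (arcs_of p)))"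
    by (rule good_imp[OF ED_bound goodD])
qed

lemma colH: "strongly_rainbow_colouring {0..<7} (set EH) 4 GH"
  unfolding strongly_rainbow_colouring_def
proof
  show "\<forall>a\<in>set EH. GH a \<in> {1..4}" by code_simp
  show "\<forall>x\<in>{0..<7}. \<forall>y\<in>{0..<7}. x \<noteq> y \<longrightarrow> (\<exists>p. geodesic (set EH) x y p \<and> distinct (map GH (arcs_of p)))"
    by (rule good_imp[OF EH_bound goodH])
qed

lemma geo_unique:
  assumes "geodesic (set ED) x y p" "set (geos ED 7 x y) = {q}" "x < 7"
  shows "p = q"
  using assms geodesic_iff[OF ED_bound] by auto

lemma noD:
  assumes c: "strongly_rainbow_colouring {0..<7} (set ED) k \<Gamma>" and k: "k \<le> 4"
  shows False
proof -
  have r: "\<forall>a\<in>set ED. \<Gamma> a \<in> {1..k}" and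
    g: "\<forall>x\<in>{0..<7}. \<forall>y\<in>{0..<7}. x \<noteq> y \<longrightarrow> (\<exists>p. geodesic (set ED) x y p \<and> distinct (map \<Gamma> (arcs_of p)))"
    using c unfolding strongly_rainbow_colouring_def by blast+
  obtain p1 where p1: "geodesic (set ED) 1 4 p1" "distinct (map \<Gamma> (arcs_of p1))" using g[rule_format, of 1 4] by auto
  obtain p2 where p2: "geodesic (set ED) 4 2 p2" "distinct (map \<Gamma> (arcs_of p2))" using g[rule_format, of 4 2] by auto
  obtain p3 where p3: "geodesic (set ED) 3 1 p3" "distinct (map \<Gamma> (arcs_of p3))" using g[rule_format, of 3 1] by auto
  have "p1 = [1,2,3,4]" using geo_unique[OF p1(1) g14] by simp
  have "p2 = [4,5,0,1,2]" using geo_unique[OF p2(1) g42] by simp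
  have "p3 = [3,4,5,0,1]" using geo_unique[OF p3(1) g31] by simp
  have d1: "distinct [\<Gamma> (1,2), \<Gamma> (2,3), \<Gamma> (3,4)]" using p1(2) \<open>p1 = _\<close> by simp
  have d2: "distinct [\<Gamma> (4,5), \<Gamma> (5,0), \<Gamma> (0,1), \<Gamma> (1,2)]" using p2(2) \<open>p2 = _\<close> by simp
  have d3: "distinct [\<Gamma> (3,4), \<Gamma> (4,5), \<Gamma> (5,0), \<Gamma> (0,1)]" using p3(2) \<open>p3 = _\<close> by simp
  have rr: "\<Gamma> (1,2) \<in> {1..k}" "\<Gamma> (3,4) \<in> {1..k}" "\<Gamma> (4,5) \<in> {1..k}" "\<Gamma> (5,0) \<in> {1..k}" "\<Gamma> (0,1) \<in> {1..k}"
    using r by (simp_all add: ED_def)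
  have s: "{\<Gamma> (1,2), \<Gamma> (3,4), \<Gamma> (4,5), \<Gamma> (5,0), \<Gamma> (0,1)} \<subseteq> {1..4}" using rr k by auto
  have "card {\<Gamma> (1,2), \<Gamma> (3,4), \<Gamma> (4,5), \<Gamma> (5,0), \<Gamma> (0,1)} = 5" using d1 d2 d3 by auto
  moreover have "card {\<Gamma> (1,2), \<Gamma> (3,4), \<Gamma> (4,5), \<Gamma> (5,0), \<Gamma> (0,1)} \<le> card {1..(4::nat)}"
    by (rule card_mono[OF _ s]) simp
  ultimately show False by simp
qed

theorem lemma1:
  shows "\<exists>(V :: nat set) A H.
           digraph V A \<and> strongly_connected V A \<and>
           H \<subseteq> A \<and> digraph V H \<and> strongly_connected V H \<and>
           src V A > src V H"
proof (intro exI conjI)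
  show "digraph {0..<7} (set ED)" by (simp add: digraph_def ED_def) presburger
  show "digraph {0..<7} (set EH)" by (simp add: digraph_def EH_def) presburger
  show "set EH \<subseteq> set ED" unfolding EH_def ED_def by auto
  show "strongly_connected {0..<7} (set ED)" using good_sc[OF ED_bound goodD] by simp
  show "strongly_connected {0..<7} (set EH)" using good_sc[OF EH_bound goodH] by simp
  have h: "src {0..<7} (set EH) \<le> 4" unfolding src_def using colH by (blast intro: Least_le)
  have "\<exists>\<Gamma>. strongly_rainbow_colouring {0..<7} (set ED) (src {0..<7} (set ED)) \<Gamma>"
    unfolding src_def by (rule LeastI_ex) (use colD in blast)
  then have "src {0..<7} (set ED) > 4" using noD by (meson not_less)
  then show "src {0..<7} (set EH) < src {0..<7} (set ED)" using h by simp
qed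

end
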